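(* Let $d \ge 3$ and $s\ge 2$, $t$ be integers with either ($s = 2$ and $t \geq 6$) or ($s \geq 3$ and $t \geq 7$). Then every subgraph of $W_d(s)$ isomorphic to $F_t$ contains exactly one hub vertex of $W_d(s)$.
   Context: For $d \ge 3$ and $s \ge 1$, the $s$-hubbed wheel $W_d(s) = \overline{K_s} + C_d$ has vertex set $\{u_1,\dots,u_s\} \cup \{v_1,\dots,v_d\}$ (hub vertices $u_a$ and boundary vertices $v_i$), where $v_1v_2\cdots v_dv_1$ is a cycle, the hub vertices are pairwise non-adjacent, and every $u_a$ is adjacent to every $v_i$. The fan $F_t$ ($t\ge 3$) is the graph obtained from a cycle $v_1v_2\cdots v_tv_1$ by adding all chords $v_1v_i$, $3 \le i \le t-1$. *)

theory Defs
  imports Main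
begin

text \<open>Hubbed wheel W_d(s): hub vertices Inl a (a < s), boundary vertices Inr i (i < d),
  boundary cycle Inr 0, Inr 1, ..., Inr (d-1), Inr 0 (0-indexed).\<close>
definition wheel_verts :: "nat \<Rightarrow> nat \<Rightarrow> (nat + nat) set" where
  "wheel_verts d s = Inl ` {..<s} \<union> Inr ` {..<d}"

fun wheel_adj :: "nat \<Rightarrow> nat \<Rightarrow> (nat + nat) \<Rightarrow> (nat + nat) \<Rightarrow> bool" where
  "wheel_adj d s (Inl a) (Inl b) = False"
| "wheel_adj d s (Inl a) (Inr i) = (a < s \<and> i < d)"
| "wheel_adj d s (Inr i) (Inl a) = (a < s \<and> i < d)"
| "wheel_adj d s (Inr i) (Inr j) = (i < d \<and> j < d \<and> (j = (i + 1) mod d \<or> i = (j + 1) mod d))"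

text \<open>Fan F_t on vertices 0..t-1 (0-indexed: vertex k is v_(k+1) of the paper):
  cycle edges {k, k+1} and {t-1, 0}, plus chords from 0 to every vertex.\<close>
definition fan_verts :: "nat \<Rightarrow> nat set" where
  "fan_verts t = {..<t}"

definition fan_adj :: "nat \<Rightarrow> nat \<Rightarrow> nat \<Rightarrow> bool" where
  "fan_adj t i j = (i < t \<and> j < t \<and> i \<noteq> j \<and> (i = 0 \<or> j = 0 \<or> j = i + 1 \<or> i = j + 1))"

definition subgraph_embedding ::
  "'a set \<Rightarrow> ('a \<Rightarrow> 'a \<Rightarrow> bool) \<Rightarrow> 'b set \<Rightarrow> ('b \<Rightarrow> 'b \<Rightarrow> bool) \<Rightarrow> ('a \<Rightarrow> 'b) \<Rightarrow> bool" where
  "subgraph_embedding V E V' E' f \<longleftrightarrow>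
     inj_on f V \<and> f ` V \<subseteq> V' \<and> (\<forall>x\<in>V. \<forall>y\<in>V. E x y \<longrightarrow> E' (f x) (f y))"

end

theory Submission
  imports Defs
begin

lemma nbr_Inr:
  assumes "wheel_adj d s (Inr v) w"
  shows "(\<exists>a. a < s \<and> w = Inl a) \<or> w = Inr ((v+1) mod d) \<or> w = Inr ((v + d - 1) mod d)"
proof (cases w)
  case (Inl a) then show ?thesis using assms by auto
next
  case (Inr j)
  then have j: "j < d" "v < d" "j = (v+1) mod d \<or> v = (j+1) mod d" using assms by auto
  show ?thesis
  proof (cases "j = (v+1) mod d")
    case True then show ?thesis using Inr by auto
  next
    case False
    then have v: "v = (j+1) mod d" using j by auto
    have "j = (v + d - 1) mod d"
    proof (cases "j + 1 < d")
      case True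
      then have "v = j + 1" using v by simp
      then have "v + d - 1 = j + d" by simp
      then show ?thesis using j by simp
    next
      case False
      then have "j + 1 = d" using j by simp
      then have "v = 0" using v by simp
      then show ?thesis using \<open>j + 1 = d\<close> by simp
    qed
    then show ?thesis using Inr by auto
  qed
qed

theorem lemma2p4:
  fixes d s t :: nat and f :: "nat \<Rightarrow> nat + nat"
  assumes "d \<ge> 3" and "s \<ge> 2"
    and "(s = 2 \<and> t \<ge> 6) \<or> (s \<ge> 3 \<and> t \<ge> 7)"
    and "subgraph_embedding (fan_verts t) (fan_adj t) (wheel_verts d s) (wheel_adj d s) f"
  shows "card {a. a < s \<and> Inl a \<in> f ` fan_verts t} = 1"
proof -
  have inj: "inj_on f {..<t}" and img: "f ` {..<t} \<subseteq> wheel_verts d s"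
    and adj: "\<And>x y. x < t \<Longrightarrow> y < t \<Longrightarrow> fan_adj t x y \<Longrightarrow> wheel_adj d s (f x) (f y)"
    using assms(4) unfolding subgraph_embedding_def fan_verts_def by auto
  have t6: "t \<ge> 6" using assms(3) by auto
  have adj0: "\<And>i. 0 < i \<Longrightarrow> i < t \<Longrightarrow> wheel_adj d s (f 0) (f i)"
    using adj unfolding fan_adj_def by auto
  have adjS: "\<And>i. 0 < i \<Longrightarrow> i + 1 < t \<Longrightarrow> wheel_adj d s (f i) (f (i+1))"
    using adj unfolding fan_adj_def by auto
  have dist: "\<And>i j. i < t \<Longrightarrow> j < t \<Longrightarrow> i \<noteq> j \<Longrightarrow> f i \<noteq> f j"
    using inj by (auto simp: inj_on_def)
  obtain a where a: "f 0 = Inl a" "a < s"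
  proof (cases "f 0")
    case (Inl a)
    then show ?thesis using that adj0[of 1] t6 by (cases "f 1") auto
  next
    case (Inr v)
    define x where "x = (v+1) mod d"
    define y where "y = (v + d - 1) mod d"
    have N: "\<And>i. 0 < i \<Longrightarrow> i < t \<Longrightarrow> (\<exists>a. a < s \<and> f i = Inl a) \<or> f i = Inr x \<or> f i = Inr y"
    proof -
      fix i :: nat assume "0 < i" "i < t"
      then have "wheel_adj d s (Inr v) (f i)" using adj0 Inr by metis
      from nbr_Inr[OF this] show "(\<exists>a. a < s \<and> f i = Inl a) \<or> f i = Inr x \<or> f i = Inr y"
        unfolding x_def y_def .
    qed
    have NL: "\<And>i. 0 < i \<Longrightarrow> i + 1 < t \<Longrightarrow> \<not> ((\<exists>a. f i = Inl a) \<and> (\<exists>b. f (i+1) = Inl b))"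
    proof -
      fix i :: nat assume h: "0 < i" "i + 1 < t"
      show "\<not> ((\<exists>a. f i = Inl a) \<and> (\<exists>b. f (i+1) = Inl b))"
        using adjS[OF h] by auto
    qed
    have False
    proof (cases "s = 2")
      case True
      have sub: "f ` {1..5} \<subseteq> {Inl 0, Inl 1, Inr x, Inr y}"
      proof
        fix z assume "z \<in> f ` {1..5}"
        then obtain i where "i \<in> {1..5}" "z = f i" by auto
        then show "z \<in> {Inl 0, Inl 1, Inr x, Inr y}" using N[of i] t6 True by auto
      qed
      have "card (f ` {1..5}) \<le> card {Inl (0::nat), Inl 1, Inr x, Inr y}"
        using card_mono[OF _ sub] by simp
      also have "\<dots> \<le> 4" using card_length[of "[Inl (0::nat), Inl 1, Inr x, Inr y]"] by simp
      finally have "card (f ` {1..5::nat}) \<le> 4" .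
      moreover have "inj_on f {1..5}" using t6 by (intro inj_on_subset[OF inj]) auto
      then have "card (f ` {1..5::nat}) = 5" by (simp add: card_image)
      ultimately show False by simp
    next
      case False
      then have t7: "t \<ge> 7" using assms(3) by auto
      have B: "\<And>i. 0 < i \<Longrightarrow> i + 1 < t \<Longrightarrow>
          (f i = Inr x \<or> f i = Inr y) \<or> (f (i+1) = Inr x \<or> f (i+1) = Inr y)"
      proof -
        fix i assume "0 < i" "i + 1 < t"
        then show "(f i = Inr x \<or> f i = Inr y) \<or> (f (i+1) = Inr x \<or> f (i+1) = Inr y)"
          using N[of i] N[of "i+1"] NL[of i] by fastforce
      qed
      have P: "\<And>k. k \<le> 2 \<Longrightarrow> \<exists>i. (i = 2*k+1 \<or> i = 2*k+2) \<and> (f i = Inr x \<or> f i = Inr y)"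
      proof -
        fix k :: nat assume "k \<le> 2"
        then have "0 < 2*k+1" "2*k+1+1 < t" using t7 by auto
        from B[OF this] show "\<exists>i. (i = 2*k+1 \<or> i = 2*k+2) \<and> (f i = Inr x \<or> f i = Inr y)"
          by force
      qed
      obtain i1 where i1: "i1 = 1 \<or> i1 = 2" "f i1 = Inr x \<or> f i1 = Inr y" using P[of 0] by (auto simp: eval_nat_numeral)
      obtain i2 where i2: "i2 = 3 \<or> i2 = 4" "f i2 = Inr x \<or> f i2 = Inr y" using P[of 1] by (auto simp: eval_nat_numeral)
      obtain i3 where i3: "i3 = 5 \<or> i3 = 6" "f i3 = Inr x \<or> f i3 = Inr y" using P[of 2] by (auto simp: eval_nat_numeral)
      have "f i1 \<noteq> f i2" "f i1 \<noteq> f i3" "f i2 \<noteq> f i3"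
        using dist i1(1) i2(1) i3(1) t7 by auto
      then show False using i1(2) i2(2) i3(2) by auto
    qed
    then show ?thesis ..
  qed
  have others: "\<And>i. 0 < i \<Longrightarrow> i < t \<Longrightarrow> \<not> (\<exists>b. f i = Inl b)"
  proof -
    fix i :: nat assume h: "0 < i" "i < t"
    show "\<not> (\<exists>b. f i = Inl b)" using adj0[OF h] a by auto
  qed
  have "{a. a < s \<and> Inl a \<in> f ` fan_verts t} = {a}"
  proof (rule set_eqI, rule iffI)
    fix b assume "b \<in> {a. a < s \<and> Inl a \<in> f ` fan_verts t}"
    then obtain i where "i < t" "f i = Inl b" unfolding fan_verts_def by auto
    then show "b \<in> {a}" using others[of i] a by (cases i) auto
  next
    fix b assume "b \<in> {a}"
    then show "b \<in> {a. a < s \<and> Inl a \<in> f ` fan_verts t}"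
      using a t6 unfolding fan_verts_def by (auto intro!: image_eqI[of _ _ 0])
  qed
  then show ?thesis by simp
qed

end
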